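(* Let $n\ge 2$, $d\in\mathbb{R}$, $a\in\mathbb{R}_+^n$ (all $a_i>0$), $b\in\mathbb{R}^n$, and consider the problem of minimizing $f(x)=\sum_{i=1}^n \left(\tfrac12 a_i x_i^2+b_i x_i\right)$ over $x\in\mathbb{R}^n$ subject to $\sum_{i=1}^n x_i=d$. Let $H=\mathrm{diag}(a_1,\dots,a_n)$. Let $L\in\mathbb{R}^{n\times n}$ be the weighted Laplacian of an undirected connected graph on $n$ nodes (so $L=L^\top\succeq 0$, $L\mathbf{1}_n=0$, and $0$ is a simple eigenvalue of $L$). Assume there exists $\varepsilon\in[0,1)$ such that $-\varepsilon I_{n-1}\preceq I_{n-1}-U^\top LHL\,U\preceq \varepsilon I_{n-1}$, where $U\in\mathbb{R}^{n\times(n-1)}$ is any matrix whose columns form an orthonormal basis of $\mathbf{1}_n^\perp$. Fix $q\in\{0,1,2,\dots\}$ and an initial point $x^0$ with $\sum_i x^0_i=d$, and define the iteration $$x^{k+1}=x^k-L\sum_{p=0}^{q}(I_n-LHL)^p\,(Lb+LHx^k),\qquad k\ge 0.$$ Then the problem has a unique optimal solution $x^\star$, every iterate satisfies $\sum_i x^k_i=d$, and $x^\star$ is globally exponentially stable for this iteration: there exist a positive definite quadratic function $V$ on the affine set $\{x:\sum_i x_i=d\}$ with $V(x^\star)=0$ and a constant $\hat c\in(0,1)$ independent of $k$ and $x^0$ such that $V(x^{k+1})\le (1-\hat c)V(x^k)$ for all $k$; in particular $x^k\to x^\star$ exponentially fast.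
   Context: This iteration is the "distributed approx-Newton" algorithm (DANA) with unit step size: the term $-\sum_{p=0}^q(I_n-LHL)^p(Lb+LHx^k)$ is a truncated Taylor-series ($q$-approximation) of a Newton step for the reformulated unconstrained problem $\min_z f(x^k+Lz)$. $\mathbf{1}_n$ denotes the all-ones vector and $\mathbf{1}_n^\perp$ its orthogonal complement. *)

theory Defs
  imports "HOL-Analysis.Analysis"
begin

definition diag_mat :: "real ^ 'n \<Rightarrow> real ^ 'n ^ 'n" where
  "diag_mat a = (\<chi> i j. if i = j then a $ i else 0)"

text \<open>Matrix power (the type real^'n^'n carries a componentwise power, so we define the matrix one).\<close>
fun mat_pow :: "real ^ 'n ^ 'n \<Rightarrow> nat \<Rightarrow> real ^ 'n ^ 'n" where
  "mat_pow A 0 = mat 1"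
| "mat_pow A (Suc p) = A ** mat_pow A p"

definition loewner_le :: "real ^ 'm ^ 'm \<Rightarrow> real ^ 'm ^ 'm \<Rightarrow> bool" where
  "loewner_le A B \<longleftrightarrow> (\<forall>y. y \<bullet> (A *v y) \<le> y \<bullet> (B *v y))"

definition ones :: "real ^ 'n" where
  "ones = (\<chi> i. 1)"

definition weighted_laplacian_connected :: "real ^ 'n ^ 'n \<Rightarrow> bool" where
  "weighted_laplacian_connected L \<longleftrightarrow>
     (\<exists>w :: 'n \<Rightarrow> 'n \<Rightarrow> real.
        (\<forall>i j. w i j = w j i) \<and> (\<forall>i j. 0 \<le> w i j) \<and> (\<forall>i. w i i = 0) \<and>
        (\<forall>i j. L $ i $ j = (if i = j then (\<Sum>k\<in>UNIV. w i k) else - w i j)) \<and>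
        (\<forall>i j. (\<lambda>u v. 0 < w u v)\<^sup>*\<^sup>* i j))"

definition quad_obj :: "real ^ 'n \<Rightarrow> real ^ 'n \<Rightarrow> real ^ 'n \<Rightarrow> real" where
  "quad_obj a b x = (\<Sum>i\<in>UNIV. (1/2) * a $ i * (x $ i)\<^sup>2 + b $ i * x $ i)"

definition feasible :: "real \<Rightarrow> real ^ 'n \<Rightarrow> bool" where
  "feasible d x \<longleftrightarrow> (\<Sum>i\<in>UNIV. x $ i) = d"

definition is_optimal :: "real ^ 'n \<Rightarrow> real ^ 'n \<Rightarrow> real \<Rightarrow> real ^ 'n \<Rightarrow> bool" where
  "is_optimal a b d x \<longleftrightarrow> feasible d x \<and> (\<forall>y. feasible d y \<longrightarrow> quad_obj a b x \<le> quad_obj a b y)"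

definition dana_step :: "real ^ 'n ^ 'n \<Rightarrow> real ^ 'n \<Rightarrow> real ^ 'n \<Rightarrow> nat \<Rightarrow> real ^ 'n \<Rightarrow> real ^ 'n" where
  "dana_step L a b q x =
     x - L *v ((\<Sum>p\<in>{0..q}. mat_pow (mat 1 - L ** diag_mat a ** L) p)
               *v (L *v b + L *v (diag_mat a *v x)))"

end

theory Submission
  imports Defs
begin


lemma lap_sym: assumes "weighted_laplacian_connected L" shows "transpose L = L"
proof -
  from assms obtain w where ws: "\<forall>i j. w i j = w j i" and wL: "\<forall>i j. L $ i $ j = (if i = j then (\<Sum>k\<in>UNIV. w i k) else - w i j)"
    unfolding weighted_laplacian_connected_def by blast
  show ?thesis unfolding transpose_def using ws wL by (simp add: vec_eq_iff)
qed

lemma lap_ones: assumes "weighted_laplacian_connected L" shows "L *v ones = 0"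
proof -
  from assms obtain w where w0: "\<forall>i. w i i = 0" and wL: "\<forall>i j. L $ i $ j = (if i = j then (\<Sum>k\<in>UNIV. w i k) else - w i j)"
    unfolding weighted_laplacian_connected_def by blast
  have "\<And>i j. L $ i $ j = (if i = j then (\<Sum>k\<in>UNIV. w i k) else 0) - w i j"
    using w0 wL by auto
  then show ?thesis
    by (simp add: vec_eq_iff matrix_vector_mult_def ones_def sum_subtractf)
qed

lemma sym_inner: assumes "transpose A = A" shows "x \<bullet> (A *v y) = (A *v x) \<bullet> (y::real^'n)"
  by (metis assms dot_lmul_matrix vector_transpose_matrix)

lemma diag_sym: "transpose (diag_mat a) = diag_mat a"
  by (simp add: transpose_def diag_mat_def vec_eq_iff)

lemma diag_mv: "diag_mat a *v x = (\<chi> i. a $ i * x $ i)"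
  proof -
  have "\<And>i. (\<Sum>j\<in>UNIV. (if i = j then a $ i else 0) * x $ j) = a $ i * x $ i"
  proof -
    fix i
    have "(\<Sum>j\<in>UNIV. (if i = j then a $ i else 0) * x $ j) = (\<Sum>j\<in>UNIV. if j = i then a $ i * x $ i else 0)"
      by (rule sum.cong) auto
    then show "(\<Sum>j\<in>UNIV. (if i = j then a $ i else 0) * x $ j) = a $ i * x $ i" by simp
  qed
  then show ?thesis by (simp add: diag_mat_def matrix_vector_mult_def vec_eq_iff)
qed

lemma ones_inner: "ones \<bullet> v = (\<Sum>i\<in>UNIV. v $ i)"
  by (simp add: ones_def inner_vec_def)

lemma mat_pow_mv: "mat_pow B p *v v = ((\<lambda>v. B *v v) ^^ p) v"
  by (induction p) (auto simp: matrix_vector_mul_assoc[symmetric])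

lemma sum_mv: "finite S \<Longrightarrow> (\<Sum>p\<in>S. (M p :: real^'n^'n)) *v v = (\<Sum>p\<in>S. M p *v v)"
  by (induction S rule: finite_induct) (auto simp: matrix_vector_mult_add_rdistrib)




lemma opt:
  fixes a b xs :: "real^'n" and d lam :: real
  assumes apos: "\<forall>i. 0 < a $ i"
    and lam: "lam = (d + (\<Sum>i\<in>UNIV. b $ i / a $ i)) / (\<Sum>i\<in>UNIV. 1 / a $ i)"
    and xs: "xs = (\<chi> i. (lam - b $ i) / a $ i)"
  shows "is_optimal a b d xs \<and> (\<forall>y. is_optimal a b d y \<longrightarrow> y = xs)"
    and "\<And>i. a $ i * xs $ i + b $ i = lam"
proof -
  show grad: "\<And>i. a $ i * xs $ i + b $ i = lam"
  proof -
    fix i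
    have "a $ i \<noteq> 0" using apos by (metis less_irrefl)
    then show "a $ i * xs $ i + b $ i = lam" by (simp add: xs)
  qed
  have spos: "(\<Sum>i\<in>UNIV. 1 / a $ i) > 0"
    by (rule sum_pos) (auto simp: apos)
  have "(\<Sum>i\<in>UNIV. xs $ i) = (\<Sum>i\<in>UNIV. lam * (1 / a $ i) - b $ i / a $ i)"
    using xs by (simp add: diff_divide_distrib)
  also have "\<dots> = lam * (\<Sum>i\<in>UNIV. 1 / a $ i) - (\<Sum>i\<in>UNIV. b $ i / a $ i)"
    by (simp add: sum_subtractf sum_distrib_left)
  also have "\<dots> = d" using lam spos by simp
  finally have fx: "feasible d xs" unfolding feasible_def .
  have key: "quad_obj a b y - quad_obj a b xs = (\<Sum>i\<in>UNIV. (1/2) * a $ i * (y $ i - xs $ i)\<^sup>2)"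
    if "feasible d y" for y
  proof -
    have e: "\<And>i. (1/2) * a $ i * (y $ i)\<^sup>2 + b $ i * y $ i - ((1/2) * a $ i * (xs $ i)\<^sup>2 + b $ i * xs $ i)
        = (1/2) * a $ i * (y $ i - xs $ i)\<^sup>2 + lam * (y $ i - xs $ i)"
    proof -
      fix i
      have g: "lam = a $ i * xs $ i + b $ i" using grad[of i] by simp
      show "?thesis i" by (simp only: g) (simp add: power2_eq_square algebra_simps)
    qed
    have "quad_obj a b y - quad_obj a b xs = (\<Sum>i\<in>UNIV. (1/2) * a $ i * (y $ i - xs $ i)\<^sup>2 + lam * (y $ i - xs $ i))"
      unfolding quad_obj_def sum_subtractf[symmetric] using e by simp
    also have "\<dots> = (\<Sum>i\<in>UNIV. (1/2) * a $ i * (y $ i - xs $ i)\<^sup>2) + lam * ((\<Sum>i\<in>UNIV. y $ i) - (\<Sum>i\<in>UNIV. xs $ i))"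
      by (simp add: sum.distrib sum_distrib_left sum_subtractf algebra_simps)
    also have "\<dots> = (\<Sum>i\<in>UNIV. (1/2) * a $ i * (y $ i - xs $ i)\<^sup>2)"
      using that fx unfolding feasible_def by simp
    finally show ?thesis .
  qed
  have nn: "(\<Sum>i\<in>UNIV. (1/2) * a $ i * (y $ i - xs $ i)\<^sup>2) \<ge> 0" for y
    by (rule sum_nonneg) (simp add: apos less_imp_le)
  show "is_optimal a b d xs \<and> (\<forall>y. is_optimal a b d y \<longrightarrow> y = xs)"
  proof (intro conjI allI impI)
    show "is_optimal a b d xs" unfolding is_optimal_def
    proof (intro conjI allI impI fx)
      fix y :: "real^'n" assume "feasible d y"
      from key[OF this] nn[of y] show "quad_obj a b xs \<le> quad_obj a b y" by linarith
    qed
  next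
    fix y :: "real^'n" assume "is_optimal a b d y"
    then have fy: "feasible d y" and le: "quad_obj a b y \<le> quad_obj a b xs"
      unfolding is_optimal_def using fx by auto
    have "(\<Sum>i\<in>UNIV. (1/2) * a $ i * (y $ i - xs $ i)\<^sup>2) = 0"
      using key[OF fy] le nn[of y] by linarith
    then have "\<forall>i\<in>UNIV. (1/2) * a $ i * (y $ i - xs $ i)\<^sup>2 = 0"
      by (subst (asm) sum_nonneg_eq_0_iff) (auto simp: apos less_imp_le)
    then show "y = xs"
    proof (subst vec_eq_iff, intro allI)
      fix i assume h: "\<forall>i\<in>UNIV. (1/2) * a $ i * (y $ i - xs $ i)\<^sup>2 = 0"
      have "a $ i \<noteq> 0" using apos by (metis less_irrefl)
      then show "y $ i = xs $ i" using h by (metis UNIV_I mult_eq_0_iff power_eq_0_iff right_minus_eq divide_eq_0_iff zero_neq_numeral one_neq_zero)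
    qed
  qed
qed

lemma polar_contract:
  fixes B :: "real^'n^'n"
  assumes sym: "\<And>x y. x \<bullet> (B *v y) = (B *v x) \<bullet> y"
    and bnd: "\<And>v. ones \<bullet> v = 0 \<Longrightarrow> \<bar>v \<bullet> (B *v v)\<bar> \<le> \<epsilon> * (v \<bullet> v)"
    and inv: "\<And>v. ones \<bullet> v = 0 \<Longrightarrow> ones \<bullet> (B *v v) = 0"
    and v: "ones \<bullet> v = 0"
  shows "norm (B *v v) \<le> \<epsilon> * norm v"
proof (cases "B *v v = 0")
  case True
  have "0 \<le> \<epsilon> * (v \<bullet> v)" using bnd[OF v] by linarith
  then have "0 \<le> \<epsilon> * norm v" 
  proof (cases "v = 0")
    case False
    then have "v \<bullet> v > 0" by simp
    then have "\<epsilon> \<ge> 0" using \<open>0 \<le> \<epsilon> * (v \<bullet> v)\<close> by (simp only: zero_le_mult_iff) linarith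
    then show ?thesis by simp
  qed simp
  then show ?thesis using True by simp
next
  case False
  define w where "w = B *v v"
  have vnz: "v \<noteq> 0" using False by auto
  have nw: "norm w > 0" using False w_def by simp
  have nv: "norm v > 0" using vnz by simp
  define t where "t = norm v / norm w"
  have tpos: "t > 0" using nw nv t_def by simp
  define x where "x = t *\<^sub>R w"
  have xW: "ones \<bullet> x = 0" using inv[OF v] x_def w_def by simp
  have pW: "ones \<bullet> (x + v) = 0" "ones \<bullet> (x - v) = 0" using xW v by (simp_all add: inner_add_right inner_diff_right)
  have b1: "(x + v) \<bullet> (B *v (x + v)) \<le> \<epsilon> * ((x + v) \<bullet> (x + v))" using bnd[OF pW(1)] by linarith
  have b2: "- ((x - v) \<bullet> (B *v (x - v))) \<le> \<epsilon> * ((x - v) \<bullet> (x - v))" using bnd[OF pW(2)] by linarith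
  have sx: "v \<bullet> (B *v x) = x \<bullet> (B *v v)" using sym[of v x] by (simp add: inner_commute)
  have pol: "(x + v) \<bullet> (B *v (x + v)) - (x - v) \<bullet> (B *v (x - v)) = 4 * (x \<bullet> (B *v v))"
    using sx by (simp add: matrix_vector_right_distrib matrix_vector_mult_diff_distrib inner_add_left inner_add_right inner_diff_left inner_diff_right)
  have par: "(x + v) \<bullet> (x + v) + (x - v) \<bullet> (x - v) = 2 * (x \<bullet> x) + 2 * (v \<bullet> v)"
    by (simp add: inner_add_left inner_add_right inner_diff_left inner_diff_right inner_commute)
  have "4 * (x \<bullet> (B *v v)) \<le> \<epsilon> * (2 * (x \<bullet> x) + 2 * (v \<bullet> v))"
  proof -
    have "\<epsilon> * ((x + v) \<bullet> (x + v)) + \<epsilon> * ((x - v) \<bullet> (x - v)) = \<epsilon> * (2 * (x \<bullet> x) + 2 * (v \<bullet> v))"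
      using par by (metis distrib_left)
    then show ?thesis using b1 b2 pol by linarith
  qed
  moreover have "x \<bullet> (B *v v) = norm v * norm w"
    using nw by (simp add: x_def w_def[symmetric] t_def dot_square_norm power2_eq_square)
  moreover have "x \<bullet> x = (norm v)\<^sup>2"
    using nw by (simp add: x_def t_def dot_square_norm power2_eq_square)
  moreover have "v \<bullet> v = (norm v)\<^sup>2" by (simp add: dot_square_norm)
  ultimately have "4 * (norm v * norm w) \<le> \<epsilon> * (2 * (norm v)\<^sup>2 + 2 * (norm v)\<^sup>2)" by (simp only:)
  then have "norm v * norm w \<le> norm v * (\<epsilon> * norm v)" by (simp add: power2_eq_square algebra_simps)
  then have "norm w \<le> \<epsilon> * norm v" using nv by (simp only: mult_le_cancel_left_pos)
  then show ?thesis unfolding w_def .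
qed




lemma U_span:
  fixes U :: "real ^ 'm ^ 'n"
  assumes Udim: "CARD('m) + 1 = CARD('n)"
    and Uorth: "transpose U ** U = mat 1"
    and Uperp: "\<forall>j. column j U \<bullet> ones = 0"
    and v: "ones \<bullet> v = 0"
  shows "v = U *v (transpose U *v v)"
proof -
  have cdot: "column j U \<bullet> column k U = (if j = k then 1 else 0)" for j k
  proof -
    have "(transpose U ** U) $ j $ k = column j U \<bullet> column k U"
      by (simp add: matrix_matrix_mult_def transpose_def column_def inner_vec_def)
    then show ?thesis using Uorth by (simp add: mat_def)
  qed
  define C where "C = range (\<lambda>j. column j U)"
  have inj: "inj (\<lambda>j. column j U)"
  proof (rule injI)
    fix j k assume "column j U = column k U"
    then have "column j U \<bullet> column k U = column j U \<bullet> column j U" by simp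
    then show "j = k" using cdot[of j k] cdot[of j j] by (auto split: if_splits)
  qed
  have cardC: "card C = CARD('m)" unfolding C_def using inj by (simp add: card_image)
  have finC: "finite C" unfolding C_def by simp
  have indep: "independent C"
  proof (rule pairwise_orthogonal_independent)
    show "pairwise orthogonal C" unfolding C_def pairwise_def orthogonal_def
      using cdot by auto
    show "0 \<notin> C" unfolding C_def using cdot by (auto, metis inner_zero_left zero_neq_one)
  qed
  define W where "W = {x::real^'n. ones \<bullet> x = 0}"
  have CW: "C \<subseteq> W" unfolding C_def W_def using Uperp by (auto simp: inner_commute)
  have ones_nz: "ones \<noteq> (0::real^'n)" by (simp add: ones_def vec_eq_iff)
  have dimW: "dim W = CARD('m)" unfolding W_def using dim_hyperplane[OF ones_nz] Udim by simp
  have "W \<subseteq> span C" using card_eq_dim[OF CW _ finC] cardC dimW indep by simp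
  moreover have "span C \<subseteq> range (\<lambda>y. U *v y)"
  proof (rule span_minimal)
    show "C \<subseteq> range (\<lambda>y. U *v y)" unfolding C_def
      by (auto simp: matrix_vector_mult_basis[symmetric])
    show "subspace (range (\<lambda>y. U *v y))"
      by (rule linear_subspace_image) (auto simp: subspace_UNIV)
  qed
  ultimately obtain y where y: "v = U *v y" using v unfolding W_def by auto
  have "transpose U *v v = y" using y Uorth by (simp add: matrix_vector_mul_assoc)
  then show ?thesis using y by simp
qed




lemma neg_mv: "(- M) *v (y::real^'m) = - (M *v y)"
  by (simp add: matrix_vector_mult_def vec_eq_iff sum_negf)

lemma pd_bound:
  fixes Q :: "real^'n \<Rightarrow> real"
  assumes cont: "continuous_on UNIV Q"
    and hom: "\<And>t x. Q (t *\<^sub>R x) = t\<^sup>2 * Q x"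
    and pos: "\<And>x. ones \<bullet> x = 0 \<Longrightarrow> x \<noteq> 0 \<Longrightarrow> Q x > 0"
  shows "\<exists>m>0. \<forall>x. ones \<bullet> x = 0 \<longrightarrow> m * (norm x)\<^sup>2 \<le> Q x"
proof -
  define K where "K = sphere (0::real^'n) 1 \<inter> {x. ones \<bullet> x = 0}"
  have cK: "compact K" unfolding K_def by (intro compact_Int_closed compact_sphere closed_hyperplane)
  have Q0: "Q 0 = 0" using hom[of 0 0] by simp
  have scale: "x /\<^sub>R norm x \<in> K" if "ones \<bullet> x = 0" "x \<noteq> 0" for x
    using that unfolding K_def by (simp add: inner_scaleR_right)
  show ?thesis
  proof (cases "K = {}")
    case True
    have "\<forall>x. ones \<bullet> x = 0 \<longrightarrow> 1 * (norm x)\<^sup>2 \<le> Q x"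
      using scale True Q0 by fastforce
    then show ?thesis by (intro exI[of _ 1]) auto
  next
    case False
    obtain x0 where x0: "x0 \<in> K" and mn: "\<forall>y\<in>K. Q x0 \<le> Q y"
      using continuous_attains_inf[OF cK False continuous_on_subset[OF cont]] by blast
    have x0p: "Q x0 > 0" using x0 pos unfolding K_def by (metis IntD1 IntD2 mem_Collect_eq mem_sphere_0 norm_zero zero_neq_one)
    have "m * (norm x)\<^sup>2 \<le> Q x" if "ones \<bullet> x = 0" "m = Q x0" for x m
    proof (cases "x = 0")
      case True then show ?thesis using Q0 by simp
    next
      case False
      have "Q x0 \<le> Q (x /\<^sub>R norm x)" using mn scale[OF that(1) False] by blast
      also have "Q (x /\<^sub>R norm x) = (1 / norm x)\<^sup>2 * Q x" using hom by (simp add: divide_inverse_commute)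
      finally have "Q x0 \<le> (1 / norm x)\<^sup>2 * Q x" .
      then have "(norm x)\<^sup>2 * Q x0 \<le> (norm x)\<^sup>2 * ((1 / norm x)\<^sup>2 * Q x)"
        by (simp add: mult_left_mono)
      also have "\<dots> = Q x" using False by (simp add: power2_eq_square)
      finally show ?thesis using that(2) by (simp add: mult.commute)
    qed
    then show ?thesis using x0p by blast
  qed
qed

lemma telescope:
  fixes B :: "real^'n^'n"
  shows "(mat 1 - B) *v (\<Sum>p\<in>{0..q}. ((\<lambda>v. B *v v) ^^ p) g) = g - ((\<lambda>v. B *v v) ^^ Suc q) g"
proof (induction q)
  case 0 then show ?case by (simp add: matrix_vector_mult_diff_rdistrib)
next
  case (Suc q)
  have "(\<Sum>p\<in>{0..Suc q}. ((\<lambda>v. B *v v) ^^ p) g) = (\<Sum>p\<in>{0..q}. ((\<lambda>v. B *v v) ^^ p) g) + ((\<lambda>v. B *v v) ^^ Suc q) g"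
    by (simp add: sum.atLeast0_atMost_Suc)
  then show ?case using Suc by (simp add: matrix_vector_right_distrib matrix_vector_mult_diff_rdistrib)
qed

lemma pow_contract:
  fixes B :: "real^'n^'n"
  assumes c: "\<And>v. ones \<bullet> v = 0 \<Longrightarrow> norm (B *v v) \<le> \<epsilon> * norm v"
    and inv: "\<And>v. ones \<bullet> v = 0 \<Longrightarrow> ones \<bullet> (B *v v) = 0"
    and e: "0 \<le> \<epsilon>"
  shows "ones \<bullet> g = 0 \<Longrightarrow> norm (((\<lambda>v. B *v v) ^^ p) g) \<le> \<epsilon> ^ p * norm g \<and> ones \<bullet> (((\<lambda>v. B *v v) ^^ p) g) = 0"
proof (induction p)
  case 0 then show ?case by simp
next
  case (Suc p)
  then have h: "norm (((\<lambda>v. B *v v) ^^ p) g) \<le> \<epsilon> ^ p * norm g" "ones \<bullet> (((\<lambda>v. B *v v) ^^ p) g) = 0" by auto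
  have "norm (((\<lambda>v. B *v v) ^^ Suc p) g) \<le> \<epsilon> * norm (((\<lambda>v. B *v v) ^^ p) g)" using c[OF h(2)] by simp
  also have "\<dots> \<le> \<epsilon> * (\<epsilon> ^ p * norm g)" using h(1) e by (simp add: mult_left_mono)
  finally show ?case using inv[OF h(2)] by simp
qed




theorem theorem1:
  fixes a b :: "real ^ 'n" and d :: real and L :: "real ^ 'n ^ 'n"
    and U :: "real ^ 'm ^ 'n" and \<epsilon> :: real and q :: nat
  assumes n2: "CARD('n) \<ge> 2"
    and apos: "\<forall>i. 0 < a $ i"
    and lap: "weighted_laplacian_connected L"
    and Udim: "CARD('m) + 1 = CARD('n)"
    and Uorth: "transpose U ** U = mat 1"
    and Uperp: "\<forall>j. column j U \<bullet> ones = 0"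
    and eps: "0 \<le> \<epsilon>" "\<epsilon> < 1"
    and lower: "loewner_le (- (\<epsilon> *\<^sub>R mat 1)) (mat 1 - transpose U ** L ** diag_mat a ** L ** U)"
    and upper: "loewner_le (mat 1 - transpose U ** L ** diag_mat a ** L ** U) (\<epsilon> *\<^sub>R mat 1)"
  shows "\<exists>xs. is_optimal a b d xs \<and> (\<forall>y. is_optimal a b d y \<longrightarrow> y = xs) \<and>
           (\<forall>x. feasible d (x 0) \<and> (\<forall>k. x (Suc k) = dana_step L a b q (x k))
                \<longrightarrow> (\<forall>k. feasible d (x k))) \<and>
           (\<exists>P :: real ^ 'n ^ 'n. \<exists>c :: real.
              let V = (\<lambda>z. (z - xs) \<bullet> (P *v (z - xs))) in
              transpose P = P \<and>
              (\<exists>m>0. \<forall>z. feasible d z \<longrightarrow> m * (norm (z - xs))\<^sup>2 \<le> V z) \<and>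
              V xs = 0 \<and> 0 < c \<and> c < 1 \<and>
              (\<forall>x. feasible d (x 0) \<and> (\<forall>k. x (Suc k) = dana_step L a b q (x k))
                 \<longrightarrow> (\<forall>k. V (x (Suc k)) \<le> (1 - c) * V (x k)))) \<and>
           (\<exists>M \<rho>. 0 \<le> M \<and> 0 \<le> \<rho> \<and> \<rho> < 1 \<and>
              (\<forall>x. feasible d (x 0) \<and> (\<forall>k. x (Suc k) = dana_step L a b q (x k))
                 \<longrightarrow> (\<forall>k. norm (x k - xs) \<le> M * \<rho> ^ k * norm (x 0 - xs))))"
proof -
  define H where "H = diag_mat a"
  define B where "B = mat 1 - L ** diag_mat a ** L"
  define T where "T = (\<lambda>v. B *v v)"
  have Lsym: "transpose L = L" using lap_sym[OF lap] .
  have L1: "L *v ones = 0" using lap_ones[OF lap] .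
  have Ls: "\<And>x y. x \<bullet> (L *v y) = (L *v x) \<bullet> y" using sym_inner[OF Lsym] .
  have Hs: "\<And>x y. x \<bullet> (H *v y) = (H *v x) \<bullet> y" unfolding H_def using sym_inner[OF diag_sym] .
  have LW: "\<And>u. ones \<bullet> (L *v u) = 0" using Ls L1 by simp
  have Bmv: "\<And>v. B *v v = v - L *v (H *v (L *v v))"
    unfolding B_def H_def by (simp add: matrix_vector_mult_diff_rdistrib matrix_vector_mul_assoc[symmetric])
  have Bsym: "\<And>x y. x \<bullet> (B *v y) = (B *v x) \<bullet> y"
  proof -
    fix x y :: "real^'n"
    have "x \<bullet> (L *v (H *v (L *v y))) = (L *v (H *v (L *v x))) \<bullet> y"
      by (metis Ls Hs inner_commute)
    then show "x \<bullet> (B *v y) = (B *v x) \<bullet> y" by (simp add: Bmv inner_diff_left inner_diff_right inner_commute)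
  qed
  have Binv: "\<And>v. ones \<bullet> v = 0 \<Longrightarrow> ones \<bullet> (B *v v) = 0" by (simp add: Bmv inner_diff_right LW)
  have Bbnd: "\<bar>v \<bullet> (B *v v)\<bar> \<le> \<epsilon> * (v \<bullet> v)" if v: "ones \<bullet> v = 0" for v
  proof -
    define y where "y = transpose U *v v"
    have vy: "v = U *v y" unfolding y_def using U_span[OF Udim Uorth Uperp v] .
    have tr: "\<And>z w. z \<bullet> (transpose U *v w) = (U *v z) \<bullet> w"
      by (metis dot_lmul_matrix vector_transpose_matrix)
    have UU: "transpose U *v (U *v y) = y" using Uorth by (simp only: matrix_vector_mul_assoc) simp
    have vv: "v \<bullet> v = y \<bullet> y" using tr[of y "U *v y"] vy by (simp only: UU)
    define C where "C = mat 1 - transpose U ** L ** diag_mat a ** L ** U"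
    have Cmv: "C *v y = y - transpose U *v (L *v (H *v (L *v (U *v y))))"
      unfolding C_def H_def by (simp add: matrix_vector_mult_diff_rdistrib matrix_vector_mul_assoc[symmetric])
    have yC: "y \<bullet> (C *v y) = v \<bullet> (B *v v)"
      using vv tr[of y "L *v (H *v (L *v (U *v y)))"] vy
      by (simp add: Cmv Bmv inner_diff_right)
    have lo: "y \<bullet> ((- (\<epsilon> *\<^sub>R mat 1)) *v y) \<le> y \<bullet> (C *v y)"
      using lower unfolding loewner_le_def C_def by blast
    have up: "y \<bullet> (C *v y) \<le> y \<bullet> ((\<epsilon> *\<^sub>R mat 1) *v y)"
      using upper unfolding loewner_le_def C_def by blast
    have e1: "(\<epsilon> *\<^sub>R mat 1) *v y = \<epsilon> *\<^sub>R y" by (simp add: scaleR_matrix_vector_assoc[symmetric])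
    have "- (\<epsilon> * (y \<bullet> y)) \<le> y \<bullet> (C *v y)" "y \<bullet> (C *v y) \<le> \<epsilon> * (y \<bullet> y)"
      using lo up by (simp_all add: neg_mv e1)
    then have h: "- (\<epsilon> * (v \<bullet> v)) \<le> v \<bullet> (B *v v)" "v \<bullet> (B *v v) \<le> \<epsilon> * (v \<bullet> v)"
      using yC vv by simp_all
    show ?thesis by (rule abs_leI) (use h in linarith)+
  qed
  have Bc: "\<And>v. ones \<bullet> v = 0 \<Longrightarrow> norm (B *v v) \<le> \<epsilon> * norm v"
    by (rule polar_contract[OF Bsym Bbnd Binv])
  have Tc: "\<And>g p. ones \<bullet> g = 0 \<Longrightarrow> norm ((T ^^ p) g) \<le> \<epsilon> ^ p * norm g"
    unfolding T_def using pow_contract[OF Bc Binv eps(1)] by blast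
  define lam where "lam = (d + (\<Sum>i\<in>UNIV. b $ i / a $ i)) / (\<Sum>i\<in>UNIV. 1 / a $ i)"
  define xs where "xs = (\<chi> i. (lam - b $ i) / a $ i)"
  note op = opt[OF apos lam_def xs_def]
  have grad: "b + H *v xs = lam *\<^sub>R ones"
    using op(2) by (simp add: vec_eq_iff H_def diag_mv ones_def algebra_simps)
  have fxs: "feasible d xs" using op(1) unfolding is_optimal_def by blast
  have sum_inner: "\<And>z. (\<Sum>i\<in>UNIV. z $ i) = ones \<bullet> z" by (simp add: ones_inner)
  have step_feas: "ones \<bullet> dana_step L a b q z = ones \<bullet> z" for z
    unfolding dana_step_def by (simp add: inner_diff_right LW)
  have feas_all: "\<forall>k. feasible d (x k)"
    if "feasible d (x 0) \<and> (\<forall>k. x (Suc k) = dana_step L a b q (x k))" for x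
  proof
    fix k show "feasible d (x k)"
      using that by (induction k) (auto simp: feasible_def sum_inner step_feas)
  qed
  define G where "G = (\<lambda>z. L *v (H *v (z - xs)))"
  have GW: "\<And>z. ones \<bullet> G z = 0" unfolding G_def using LW by simp
  have Gstep: "G (dana_step L a b q z) = (T ^^ Suc q) (G z)" for z
  proof -
    define S where "S = (\<Sum>p\<in>{0..q}. mat_pow (mat 1 - L ** diag_mat a ** L) p)"
    have gz: "L *v b + L *v (diag_mat a *v z) = G z"
    proof -
      have "L *v b + L *v (H *v z) = L *v (b + H *v xs) + L *v (H *v (z - xs))"
        by (simp add: matrix_vector_right_distrib matrix_vector_mult_diff_distrib)
      also have "\<dots> = G z" using grad L1 by (simp add: G_def matrix_vector_mult_scaleR)
      finally show ?thesis by (simp add: H_def)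
    qed
    have SG: "S *v G z = (\<Sum>p\<in>{0..q}. (T ^^ p) (G z))"
      unfolding S_def by (simp add: sum_mv mat_pow_mv T_def B_def)
    have "dana_step L a b q z = z - L *v (S *v G z)" unfolding dana_step_def S_def gz ..
    then have dd: "dana_step L a b q z - xs = (z - xs) - L *v (S *v G z)" by simp
    have "G (dana_step L a b q z) = L *v (H *v (dana_step L a b q z - xs))" by (simp only: G_def)
    also have "\<dots> = L *v (H *v ((z - xs) - L *v (S *v G z)))" by (simp only: dd)
    also have "\<dots> = G z - L *v (H *v (L *v (S *v G z)))"
      unfolding G_def by (simp only: matrix_vector_mult_diff_distrib)
    finally have "G (dana_step L a b q z) = G z - L *v (H *v (L *v (S *v G z)))" .
    also have "L *v (H *v (L *v w)) = (mat 1 - B) *v w" for w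
      by (simp add: Bmv matrix_vector_mult_diff_rdistrib)
    also have "(mat 1 - B) *v (S *v G z) = G z - (T ^^ Suc q) (G z)"
      unfolding SG T_def by (rule telescope)
    finally show ?thesis by simp
  qed
  define P where "P = H ** L ** L ** H"
  have Pt: "transpose P = P"
    unfolding P_def H_def by (simp add: matrix_transpose_mul Lsym diag_sym matrix_mul_assoc)
  have Vform: "(z - xs) \<bullet> (P *v (z - xs)) = (norm (G z))\<^sup>2" for z
  proof -
    have "(z - xs) \<bullet> (P *v (z - xs)) = (z - xs) \<bullet> (H *v (L *v (L *v (H *v (z - xs)))))"
      unfolding P_def by (simp add: matrix_vector_mul_assoc[symmetric])
    also have "\<dots> = G z \<bullet> G z" unfolding G_def by (metis Hs Ls inner_commute)
    finally show ?thesis by (simp add: dot_square_norm)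
  qed
  define r where "r = \<epsilon> ^ Suc q"
  have r0: "0 \<le> r" unfolding r_def using eps by simp
  have r1: "r < 1" unfolding r_def using eps power_less_one_iff[of \<epsilon> "Suc q"] by blast
  have rr: "r\<^sup>2 < 1" using r0 r1 by (simp add: power_less_one_iff)
  define c where "c = (1 - r\<^sup>2) / 2"
  have r2: "0 \<le> r\<^sup>2" by simp
  have c0a: "0 < c" unfolding c_def using rr by simp
  have "1 - r\<^sup>2 < 2" using r2 by linarith
  then have c0b: "c < 1" unfolding c_def by simp
  note c0 = c0a c0b
  have rc: "r\<^sup>2 \<le> 1 - c" using rr unfolding c_def by (simp add: field_simps)
  have Vdec: "(norm (G (dana_step L a b q z)))\<^sup>2 \<le> (1 - c) * (norm (G z))\<^sup>2" for z
  proof -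
    have "norm (G (dana_step L a b q z)) \<le> r * norm (G z)"
      unfolding Gstep r_def using Tc[OF GW] by blast
    then have "(norm (G (dana_step L a b q z)))\<^sup>2 \<le> (r * norm (G z))\<^sup>2"
      by (simp add: power_mono)
    also have "\<dots> = r\<^sup>2 * (norm (G z))\<^sup>2" by (simp add: power_mult_distrib)
    also have "\<dots> \<le> (1 - c) * (norm (G z))\<^sup>2" using rc by (simp add: mult_right_mono)
    finally show ?thesis .
  qed
  define Q where "Q = (\<lambda>e. (norm (L *v (H *v e)))\<^sup>2)"
  have bl: "bounded_linear (\<lambda>e. L *v (H *v e))"
    by (rule bounded_linear_compose[OF matrix_vector_mul_bounded_linear matrix_vector_mul_bounded_linear])
  have Qc: "continuous_on UNIV Q" unfolding Q_def
    by (intro continuous_on_power continuous_on_norm linear_continuous_on[OF bl])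
  have Qh: "\<And>t e. Q (t *\<^sub>R e) = t\<^sup>2 * Q e"
    unfolding Q_def by (simp add: matrix_vector_mult_scaleR power_mult_distrib)
  have Qp: "Q e > 0" if e: "ones \<bullet> e = 0" "e \<noteq> 0" for e
  proof (rule ccontr)
    assume "\<not> Q e > 0"
    then have LHe: "L *v (H *v e) = 0" unfolding Q_def by simp
    define al where "al = (ones \<bullet> (H *v e)) / real CARD('n)"
    define u where "u = H *v e - al *\<^sub>R ones"
    have oo: "ones \<bullet> (ones::real^'n) = real CARD('n)" by (simp add: ones_def inner_vec_def)
    have uW: "ones \<bullet> u = 0" unfolding u_def al_def using oo by (simp add: inner_diff_right)
    have Lu: "L *v u = 0" unfolding u_def using LHe L1
      by (simp add: matrix_vector_mult_diff_distrib matrix_vector_mult_scaleR)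
    have "\<bar>u \<bullet> u\<bar> \<le> \<epsilon> * (u \<bullet> u)" using Bbnd[OF uW] Lu by (simp add: Bmv)
    then have "u \<bullet> u = 0" using eps by (smt (verit) inner_ge_zero mult_le_cancel_right1)
    then have "u = 0" by simp
    then have He: "\<And>i. a $ i * e $ i = al" unfolding u_def H_def
      by (simp add: vec_eq_iff diag_mv ones_def)
    have ei: "\<And>i. e $ i = al * (1 / a $ i)"
      using He apos by (metis divide_eq_eq less_irrefl mult.commute times_divide_eq_right mult_1)
    have "0 = (\<Sum>i\<in>UNIV. e $ i)" using e(1) by (simp add: ones_inner)
    also have "\<dots> = al * (\<Sum>i\<in>UNIV. 1 / a $ i)" by (simp add: ei sum_distrib_left)
    finally have "al = 0" using sum_pos[of UNIV "\<lambda>i. 1 / a $ i"] apos by auto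
    then have "e = 0" using ei by (simp add: vec_eq_iff)
    then show False using e(2) by simp
  qed
  obtain m where m0: "m > 0" and mQ: "\<forall>e. ones \<bullet> e = 0 \<longrightarrow> m * (norm e)\<^sup>2 \<le> Q e"
    using pd_bound[OF Qc Qh Qp] by blast
  have GQ: "\<And>z. (norm (G z))\<^sup>2 = Q (z - xs)" unfolding G_def Q_def ..
  have feasW: "\<And>z. feasible d z \<Longrightarrow> ones \<bullet> (z - xs) = 0"
    using fxs by (simp add: feasible_def sum_inner inner_diff_right)
  have mV: "\<And>z. feasible d z \<Longrightarrow> m * (norm (z - xs))\<^sup>2 \<le> (norm (G z))\<^sup>2"
    using mQ feasW GQ by simp
  obtain K0 where K0: "\<forall>e. norm (L *v (H *v e)) \<le> K0 * norm e"
    using linear_bounded[OF bounded_linear.linear[OF bl]] by blast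
  define K where "K = max K0 0"
  have K: "\<And>z. norm (G z) \<le> K * norm (z - xs)" "K \<ge> 0"
    unfolding G_def K_def using K0 by (auto intro: order_trans[OF _ mult_right_mono])
  show ?thesis
  proof (intro exI[of _ xs] conjI allI impI)
    show "is_optimal a b d xs" using op(1) by blast
    show "\<And>y. is_optimal a b d y \<Longrightarrow> y = xs" using op(1) by blast
    show "\<And>x k. feasible d (x 0) \<and> (\<forall>k. x (Suc k) = dana_step L a b q (x k)) \<Longrightarrow> feasible d (x k)"
      using feas_all by blast
  next
    show "\<exists>P c. let V = \<lambda>z. (z - xs) \<bullet> (P *v (z - xs)) in transpose P = P \<and>
              (\<exists>m>0. \<forall>z. feasible d z \<longrightarrow> m * (norm (z - xs))\<^sup>2 \<le> V z) \<and>
              V xs = 0 \<and> 0 < c \<and> c < 1 \<and>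
              (\<forall>x. feasible d (x 0) \<and> (\<forall>k. x (Suc k) = dana_step L a b q (x k))
                 \<longrightarrow> (\<forall>k. V (x (Suc k)) \<le> (1 - c) * V (x k)))"
      unfolding Let_def
    proof (rule exI[of _ P], rule exI[of _ c], intro conjI allI impI)
      show "transpose P = P" by (rule Pt)
      show "\<exists>m>0. \<forall>z. feasible d z \<longrightarrow> m * (norm (z - xs))\<^sup>2 \<le> (z - xs) \<bullet> (P *v (z - xs))"
        using m0 mV Vform by auto
      show "(xs - xs) \<bullet> (P *v (xs - xs)) = 0" by simp
      show "0 < c" "c < 1" by (rule c0)+
      fix x :: "nat \<Rightarrow> real^'n" and k
      assume "feasible d (x 0) \<and> (\<forall>k. x (Suc k) = dana_step L a b q (x k))"
      then show "(x (Suc k) - xs) \<bullet> (P *v (x (Suc k) - xs)) \<le> (1 - c) * ((x k - xs) \<bullet> (P *v (x k - xs)))"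
        using Vdec[of "x k"] by (simp add: Vform)
    qed
  next
    define rho where "rho = sqrt (1 - c)"
    define M where "M = K / sqrt m"
    show "\<exists>M rho. 0 \<le> M \<and> 0 \<le> rho \<and> rho < 1 \<and>
              (\<forall>x. feasible d (x 0) \<and> (\<forall>k. x (Suc k) = dana_step L a b q (x k))
                 \<longrightarrow> (\<forall>k. norm (x k - xs) \<le> M * rho ^ k * norm (x 0 - xs)))"
    proof (rule exI[of _ M], rule exI[of _ rho], intro conjI allI impI)
      show "0 \<le> M" unfolding M_def using K(2) m0 by simp
      show "0 \<le> rho" unfolding rho_def using c0 by simp
      show "rho < 1" unfolding rho_def using c0 by simp
      fix x :: "nat \<Rightarrow> real^'n" and k
      assume hx: "feasible d (x 0) \<and> (\<forall>k. x (Suc k) = dana_step L a b q (x k))"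
      have Vk: "(norm (G (x k)))\<^sup>2 \<le> (1 - c) ^ k * (norm (G (x 0)))\<^sup>2"
      proof (induction k)
        case 0 then show ?case by simp
      next
        case (Suc k)
        have "(norm (G (x (Suc k))))\<^sup>2 \<le> (1 - c) * (norm (G (x k)))\<^sup>2" using hx Vdec by simp
        also have "\<dots> \<le> (1 - c) * ((1 - c) ^ k * (norm (G (x 0)))\<^sup>2)"
          using Suc c0 by (simp add: mult_left_mono)
        finally show ?case by (simp add: mult.assoc)
      qed
      have fk: "feasible d (x k)" using feas_all hx by blast
      have "m * (norm (x k - xs))\<^sup>2 \<le> (1 - c) ^ k * (K * norm (x 0 - xs))\<^sup>2"
      proof -
        have "(norm (G (x 0)))\<^sup>2 \<le> (K * norm (x 0 - xs))\<^sup>2" using K by (simp add: power_mono)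
        then have "(1 - c) ^ k * (norm (G (x 0)))\<^sup>2 \<le> (1 - c) ^ k * (K * norm (x 0 - xs))\<^sup>2"
          using c0 by (simp add: mult_left_mono)
        then show ?thesis using mV[OF fk] Vk by linarith
      qed
      have r2: "rho\<^sup>2 = 1 - c" unfolding rho_def using c0 by simp
      have rk: "(rho ^ k)\<^sup>2 = (1 - c) ^ k"
        by (metis r2 power_mult mult.commute)
      have M2: "M\<^sup>2 = K\<^sup>2 / m" unfolding M_def using m0 by (simp add: power_divide)
      have "(M * rho ^ k * norm (x 0 - xs))\<^sup>2 = (K\<^sup>2 / m) * ((1 - c) ^ k * (norm (x 0 - xs))\<^sup>2)"
        by (simp only: power_mult_distrib rk M2)
      also have "\<dots> = ((1 - c) ^ k * (K * norm (x 0 - xs))\<^sup>2) / m"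
        by (simp add: power_mult_distrib algebra_simps)
      finally have eqq: "(M * rho ^ k * norm (x 0 - xs))\<^sup>2 = ((1 - c) ^ k * (K * norm (x 0 - xs))\<^sup>2) / m" .
      from \<open>m * (norm (x k - xs))\<^sup>2 \<le> (1 - c) ^ k * (K * norm (x 0 - xs))\<^sup>2\<close>
      have "(norm (x k - xs))\<^sup>2 \<le> ((1 - c) ^ k * (K * norm (x 0 - xs))\<^sup>2) / m"
        using m0 by (simp add: pos_le_divide_eq mult.commute)
      then have "(norm (x k - xs))\<^sup>2 \<le> (M * rho ^ k * norm (x 0 - xs))\<^sup>2"
        by (simp only: eqq)
      then show "norm (x k - xs) \<le> M * rho ^ k * norm (x 0 - xs)"
        by (rule power2_le_imp_le) (use \<open>0 \<le> M\<close> \<open>0 \<le> rho\<close> in simp)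
    qed
  qed
qed


end
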